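(* Let $\{T_v\}$ be an extended $(n,d)$-tope arrangement. For each lattice point $u$ of $(n-1)\Delta^{d-1}$ let $\mathbb T(u)=\bigcup_{\bar j\in[\bar d]}T_{u+e_{\bar j}}$. Suppose that for every lattice point $w$ of $(n+1)\Delta^{d-1}$ the graph $\bigcup_{\bar j:\,w_{\bar j}\ge1}T_{w-e_{\bar j}}$ is acyclic. Then for every lattice point $u$ of $(n-1)\Delta^{d-1}$, every tope $T$ whose graph is a subgraph of $\mathbb T(u)$ belongs to the arrangement, i.e. $T=T_v$ where $v=RD(T)$.
   Context: Fix positive integers $n,d$; graphs are subgraphs of the complete bipartite graph with left vertices $[n]$ and right vertices $[\bar d]=\{\bar1,\dots,\bar d\}$, identified with edge sets. $RD$ is the vector of right-vertex degrees; $e_{\bar j}$ a unit vector; lattice points of $k\Delta^{d-1}$ are vectors in $\mathbb Z_{\ge0}^{[\bar d]}$ with coordinate sum $k$. Two acyclic graphs are compatible if whenever both contain a perfect matching between the same $I\subseteq[n]$, $\bar J\subseteq[\bar d]$, these matchings coincide. A tope is a map $T:[n]\to[\bar d]$ (graph $\{(i,T(i))\}$), with position $RD(T)$. An extended $(n,d)$-tope arrangement is a collection of pairwise compatible topes $T_v$, one for each lattice point $v$ of $n\Delta^{d-1}$, with $RD(T_v)=v$. *)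

theory Defs
  imports Main
begin

text \<open>Left vertices [n] = {1..n}, right vertices [d-bar] = {1..d} (a right vertex j-bar is
  encoded by the number j).\<close>

definition is_graph :: "nat \<Rightarrow> nat \<Rightarrow> (nat \<times> nat) set \<Rightarrow> bool" where
  "is_graph n d G \<longleftrightarrow> G \<subseteq> {1..n} \<times> {1..d}"

definition has_cycle :: "(nat \<times> nat) set \<Rightarrow> bool" where
  "has_cycle G \<longleftrightarrow> (\<exists>is js. length is = length js \<and> length is \<ge> 2 \<and> distinct is \<and> distinct js \<and>
     (\<forall>t < length is. (is ! t, js ! t) \<in> G \<and> (is ! ((t + 1) mod length is), js ! t) \<in> G))"

definition acyclic_graph :: "(nat \<times> nat) set \<Rightarrow> bool" where
  "acyclic_graph G \<longleftrightarrow> \<not> has_cycle G"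

definition perfect_matching_in :: "(nat \<times> nat) set \<Rightarrow> nat set \<Rightarrow> nat set \<Rightarrow> (nat \<times> nat) set \<Rightarrow> bool" where
  "perfect_matching_in G I J M \<longleftrightarrow> M \<subseteq> G \<and> M \<subseteq> I \<times> J \<and>
     (\<forall>i\<in>I. \<exists>!j. (i, j) \<in> M) \<and> (\<forall>j\<in>J. \<exists>!i. (i, j) \<in> M)"

definition compatible :: "(nat \<times> nat) set \<Rightarrow> (nat \<times> nat) set \<Rightarrow> bool" where
  "compatible G1 G2 \<longleftrightarrow> (\<forall>I J M1 M2. perfect_matching_in G1 I J M1 \<and> perfect_matching_in G2 I J M2
       \<longrightarrow> M1 = M2)"

text \<open>A tope T : [n] -> [d-bar], identified with its graph {(i, T i)}.\<close>
definition is_tope :: "nat \<Rightarrow> nat \<Rightarrow> (nat \<times> nat) set \<Rightarrow> bool" where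
  "is_tope n d T \<longleftrightarrow> is_graph n d T \<and> (\<forall>i\<in>{1..n}. \<exists>!j. (i, j) \<in> T)"

definition RD :: "(nat \<times> nat) set \<Rightarrow> nat \<Rightarrow> nat" where
  "RD G j = card {i. (i, j) \<in> G}"

text \<open>Lattice points of k Delta^{d-1}: vectors in Z_{>=0}^{[d-bar]} with coordinate sum k
  (as functions vanishing outside {1..d}).\<close>
definition lattice_point :: "nat \<Rightarrow> nat \<Rightarrow> (nat \<Rightarrow> nat) \<Rightarrow> bool" where
  "lattice_point d k v \<longleftrightarrow> (\<forall>j. j \<notin> {1..d} \<longrightarrow> v j = 0) \<and> (\<Sum>j\<in>{1..d}. v j) = k"

text \<open>u + e_j is written u(j := u j + 1); w - e_j (for w j >= 1) is w(j := w j - 1).\<close>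

definition extended_tope_arrangement :: "nat \<Rightarrow> nat \<Rightarrow> ((nat \<Rightarrow> nat) \<Rightarrow> (nat \<times> nat) set) \<Rightarrow> bool" where
  "extended_tope_arrangement n d A \<longleftrightarrow>
     (\<forall>v. lattice_point d n v \<longrightarrow> is_tope n d (A v) \<and> RD (A v) = v) \<and>
     (\<forall>v w. lattice_point d n v \<and> lattice_point d n w \<longrightarrow> compatible (A v) (A w))"

end

theory Submission
  imports Defs
begin


definition gr :: "nat \<Rightarrow> (nat \<Rightarrow> nat) \<Rightarrow> (nat \<times> nat) set" where
  "gr n f = {(i, f i) | i. i \<in> {1..n}}"

definition cnt :: "nat set \<Rightarrow> (nat \<Rightarrow> nat) \<Rightarrow> nat \<Rightarrow> nat" where
  "cnt L f j = card {i \<in> L. f i = j}"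

definition closedZ :: "nat \<Rightarrow> (nat \<Rightarrow> nat) \<Rightarrow> (nat \<Rightarrow> nat) \<Rightarrow> nat set \<Rightarrow> bool" where
  "closedZ n f g Z \<longleftrightarrow> finite Z \<and> Z \<noteq> {} \<and>
     (\<forall>z\<in>Z. \<exists>i\<in>{1..n}. f i = z \<and> g i \<in> Z \<and> g i \<noteq> z)"

lemma gr_mem: "(i, j) \<in> gr n f \<longleftrightarrow> i \<in> {1..n} \<and> j = f i"
  by (auto simp: gr_def)

lemma gr_cong: "(\<forall>i\<in>{1..n}. f i = g i) \<Longrightarrow> gr n f = gr n g"
  by (auto simp: gr_def)

lemma tope_gr:
  assumes "is_tope n d T"
  shows "T = gr n (\<lambda>i. THE j. (i,j) \<in> T)" and "\<forall>i\<in>{1..n}. (THE j. (i,j) \<in> T) \<in> {1..d}"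
proof -
  have G: "T \<subseteq> {1..n} \<times> {1..d}" and U: "\<forall>i\<in>{1..n}. \<exists>!j. (i, j) \<in> T"
    using assms by (auto simp: is_tope_def is_graph_def)
  have th: "(i, THE j. (i,j) \<in> T) \<in> T" if "i \<in> {1..n}" for i
    using U that theI' by metis
  show "T = gr n (\<lambda>i. THE j. (i,j) \<in> T)"
  proof
    show "T \<subseteq> gr n (\<lambda>i. THE j. (i, j) \<in> T)"
    proof
      fix x assume x: "x \<in> T"
      obtain i j where ij: "x = (i,j)" by force
      have i: "i \<in> {1..n}" using G x ij by auto
      have ex1: "\<exists>!j. (i,j) \<in> T" using U i by blast
      have "j = (THE j. (i,j) \<in> T)" using the1_equality[OF ex1] x ij by auto
      thus "x \<in> gr n (\<lambda>i. THE j. (i, j) \<in> T)" using i ij by (auto simp: gr_def)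
    qed
  next
    show "gr n (\<lambda>i. THE j. (i, j) \<in> T) \<subseteq> T" using th by (auto simp: gr_def)
  qed
  show "\<forall>i\<in>{1..n}. (THE j. (i,j) \<in> T) \<in> {1..d}" using th G by blast
qed

lemma RD_gr: "RD (gr n f) j = cnt {1..n} f j"
proof -
  have "{i. (i, j) \<in> gr n f} = {i \<in> {1..n}. f i = j}" by (auto simp: gr_def)
  thus ?thesis by (simp add: RD_def cnt_def)
qed

lemma cnt_sum: "finite L \<Longrightarrow> cnt L f j = (\<Sum>i\<in>L. of_bool (f i = j))"
proof -
  assume fL: "finite L"
  have "cnt L f j = (\<Sum>i\<in>{i \<in> L. f i = j}. (1::nat))" unfolding cnt_def by (rule card_eq_sum)
  also have "\<dots> = (\<Sum>i\<in>L. if f i = j then 1 else 0)" by (rule sum.inter_filter[OF fL])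
  also have "\<dots> = (\<Sum>i\<in>L. of_bool (f i = j))" by (intro sum.cong) auto
  finally show ?thesis .
qed

lemma cnt_remove: "finite L \<Longrightarrow> i0 \<in> L \<Longrightarrow> cnt L f j = cnt (L - {i0}) f j + of_bool (f i0 = j)"
proof -
  assume fL: "finite L" and i0: "i0 \<in> L"
  have "cnt L f j = (\<Sum>i\<in>L. of_bool (f i = j))" by (rule cnt_sum[OF fL])
  also have "\<dots> = of_bool (f i0 = j) + (\<Sum>i\<in>L - {i0}. of_bool (f i = j))" by (rule sum.remove[OF fL i0])
  also have "(\<Sum>i\<in>L - {i0}. of_bool (f i = j)) = cnt (L - {i0}) f j" using fL by (simp add: cnt_sum)
  finally show ?thesis by simp
qed

lemma cnt_swap:
  assumes "finite L"
    and "\<forall>i\<in>L. of_bool (f1 i = j) + of_bool (f2 i = j) = (of_bool (g1 i = j) + of_bool (g2 i = j) :: nat)"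
  shows "cnt L f1 j + cnt L f2 j = cnt L g1 j + cnt L g2 j"
proof -
  have "cnt L f1 j + cnt L f2 j = (\<Sum>i\<in>L. of_bool (f1 i = j) + of_bool (f2 i = j))"
    using assms(1) by (simp add: cnt_sum sum.distrib)
  also have "\<dots> = (\<Sum>i\<in>L. of_bool (g1 i = j) + of_bool (g2 i = j))"
    using assms(2) by (intro sum.cong) auto
  also have "\<dots> = cnt L g1 j + cnt L g2 j"
    using assms(1) by (simp add: cnt_sum sum.distrib)
  finally show ?thesis .
qed

lemma cnt_cong: "(\<forall>i\<in>L. f i = g i) \<Longrightarrow> cnt L f j = cnt L g j"
  unfolding cnt_def by (metis (mono_tags, lifting) mem_Collect_eq Collect_cong)

lemma cnt_upd: "i0 \<in> {1..n} \<Longrightarrow> cnt {1..n} (f(i0 := p)) j + of_bool (f i0 = j) = cnt {1..n} f j + of_bool (p = j)"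
proof -
  assume i0: "i0 \<in> {1..n}"
  have "cnt {1..n} (f(i0 := p)) j = cnt ({1..n} - {i0}) (f(i0 := p)) j + of_bool (p = j)"
    using cnt_remove[OF _ i0, of "f(i0 := p)"] by simp
  moreover have "cnt ({1..n} - {i0}) (f(i0 := p)) j = cnt ({1..n} - {i0}) f j"
    by (rule cnt_cong) auto
  moreover have "cnt {1..n} f j = cnt ({1..n} - {i0}) f j + of_bool (f i0 = j)"
    using cnt_remove[OF _ i0, of f] by simp
  ultimately show ?thesis by simp
qed

lemma lp_cnt:
  assumes "\<forall>i\<in>{1..n}. f i \<in> {1..d}"
  shows "lattice_point d n (cnt {1..n} f)"
proof -
  have z: "cnt {1..n} f j = 0" if "j \<notin> {1..d}" for j
    using assms that unfolding cnt_def by auto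
  have "(\<Sum>j\<in>{1..d}. cnt {1..n} f j) = (\<Sum>j\<in>{1..d}. \<Sum>i\<in>{1..n}. of_bool (f i = j))"
    by (simp add: cnt_sum)
  also have "\<dots> = (\<Sum>i\<in>{1..n}. \<Sum>j\<in>{1..d}. of_bool (f i = j))"
    by (rule sum.swap)
  also have "\<dots> = (\<Sum>i\<in>{1..n}. (1::nat))"
  proof (rule sum.cong)
    fix i assume i: "i \<in> {1..n}"
    have "(\<Sum>j\<in>{1..d}. (of_bool (f i = j) :: nat)) = (\<Sum>j\<in>{1..d}. if j = f i then 1 else 0)"
      by (intro sum.cong) auto
    also have "\<dots> = 1" using assms i by (subst sum.delta) auto
    finally show "(\<Sum>j\<in>{1..d}. (of_bool (f i = j) :: nat)) = 1" .
  qed simp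
  also have "\<dots> = n" by simp
  finally show ?thesis using z by (auto simp: lattice_point_def)
qed

lemma has_cycle_mono: "has_cycle G \<Longrightarrow> G \<subseteq> H \<Longrightarrow> has_cycle H"
  unfolding has_cycle_def by blast


lemma nth_rot1: "k < length xs \<Longrightarrow> rotate1 xs ! k = xs ! (Suc k mod length xs)"
  using nth_rotate[of k xs 1] by simp

lemma walk:
  fixes phi :: "nat \<Rightarrow> nat"
  assumes fZ: "finite Z" and z0: "z0 \<in> Z" and cl: "\<forall>z\<in>Z. phi z \<in> Z \<and> phi z \<noteq> z"
  shows "\<exists>zs. distinct zs \<and> 2 \<le> length zs \<and> set zs \<subseteq> Z \<and> map phi zs = rotate 1 zs"
proof -
  define s where "s j = (phi ^^ j) z0" for j
  have sS: "s (Suc j) = phi (s j)" for j by (simp add: s_def)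
  have sZ: "s j \<in> Z" for j by (induction j) (auto simp: s_def z0 cl)
  have "\<not> inj_on s {0..card Z}"
  proof
    assume inj: "inj_on s {0..card Z}"
    have "card (s ` {0..card Z}) = card {0..card Z}" using inj by (rule card_image)
    also have "\<dots> = Suc (card Z)" by simp
    finally have "card (s ` {0..card Z}) = Suc (card Z)" .
    moreover have "card (s ` {0..card Z}) \<le> card Z" using sZ fZ by (intro card_mono) auto
    ultimately show False by simp
  qed
  then obtain a b where ab: "a \<noteq> b" "s a = s b" unfolding inj_on_def by blast
  have ex: "\<exists>t. \<exists>a<t. s a = s t"
  proof (cases "a < b")
    case True thus ?thesis using ab by blast
  next
    case False thus ?thesis using ab by (metis linorder_neqE_nat)
  qed
  define t where "t = (LEAST t. \<exists>a<t. s a = s t)"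
  have "\<exists>a<t. s a = s t" unfolding t_def by (rule LeastI_ex[OF ex])
  then obtain a0 where a0: "a0 < t" "s a0 = s t" by blast
  have minl: "\<not> (\<exists>a<t'. s a = s t')" if "t' < t" for t'
    using not_less_Least[of t' "\<lambda>t. \<exists>a<t. s a = s t"] that unfolding t_def by blast
  define zs where "zs = map s [a0..<t]"
  have len: "length zs = t - a0" by (simp add: zs_def)
  have dist: "distinct zs"
    unfolding zs_def distinct_map
  proof
    show "distinct [a0..<t]" by simp
    show "inj_on s (set [a0..<t])"
    proof (rule inj_onI)
      fix x y assume x: "x \<in> set [a0..<t]" and y: "y \<in> set [a0..<t]" and e: "s x = s y"
      show "x = y"
      proof (rule ccontr)
        assume "x \<noteq> y"
        then consider "x < y" | "y < x" by linarith
        thus False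
        proof cases
          case 1 thus False using minl[of y] y e by auto
        next
          case 2 thus False using minl[of x] x e by auto
        qed
      qed
    qed
  qed
  have two: "2 \<le> length zs"
  proof (rule ccontr)
    assume "\<not> 2 \<le> length zs"
    hence "t = Suc a0" using len a0 by linarith
    hence "phi (s a0) = s a0" using a0 sS by simp
    thus False using cl sZ by blast
  qed
  have setz: "set zs \<subseteq> Z" using sZ by (auto simp: zs_def)
  have "map phi zs = rotate 1 zs"
  proof (rule nth_equalityI)
    show "length (map phi zs) = length (rotate 1 zs)" by simp
    fix k assume k: "k < length (map phi zs)"
    hence k': "k < t - a0" using len by simp
    have "map phi zs ! k = phi (s (a0 + k))" using k' by (simp add: zs_def)
    also have "\<dots> = s (Suc (a0 + k))" by (simp add: sS)
    also have "\<dots> = rotate 1 zs ! k"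
    proof (cases "Suc k < t - a0")
      case True
      have "rotate 1 zs ! k = zs ! ((1 + k) mod length zs)" using k' len by (simp add: nth_rot1)
      also have "\<dots> = zs ! Suc k" using True len by simp
      also have "\<dots> = s (a0 + Suc k)" using True by (simp add: zs_def)
      finally show ?thesis by simp
    next
      case False
      hence kk: "Suc k = t - a0" using k' by simp
      have "rotate 1 zs ! k = zs ! ((1 + k) mod length zs)" using k' len by (simp add: nth_rot1)
      also have "\<dots> = zs ! 0" using kk len by simp
      also have "\<dots> = s a0" using k' by (simp add: zs_def)
      also have "\<dots> = s t" using a0 by simp
      also have "t = Suc (a0 + k)" using kk a0 by simp
      finally show ?thesis by simp
    qed
    finally show "map phi zs ! k = rotate 1 zs ! k" .
  qed
  thus ?thesis using dist two setz by blast
qed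

lemma closed_sigma:
  assumes "closedZ n f g Z"
  obtains sg zs where "\<forall>z\<in>Z. sg z \<in> {1..n} \<and> f (sg z) = z \<and> g (sg z) \<in> Z \<and> g (sg z) \<noteq> z"
    "distinct zs" "2 \<le> length zs" "set zs \<subseteq> Z" "map (\<lambda>z. g (sg z)) zs = rotate 1 zs"
proof -
  have fZ: "finite Z" and ne: "Z \<noteq> {}" and cl: "\<forall>z\<in>Z. \<exists>i\<in>{1..n}. f i = z \<and> g i \<in> Z \<and> g i \<noteq> z"
    using assms by (auto simp: closedZ_def)
  from cl obtain sg where sg: "\<forall>z\<in>Z. sg z \<in> {1..n} \<and> f (sg z) = z \<and> g (sg z) \<in> Z \<and> g (sg z) \<noteq> z"
    by metis
  from ne obtain z0 where z0: "z0 \<in> Z" by blast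
  have "\<forall>z\<in>Z. (\<lambda>z. g (sg z)) z \<in> Z \<and> (\<lambda>z. g (sg z)) z \<noteq> z" using sg by simp
  from walk[OF fZ z0 this] obtain zs where "distinct zs" "2 \<le> length zs" "set zs \<subseteq> Z"
    "map (\<lambda>z. g (sg z)) zs = rotate 1 zs" by blast
  thus ?thesis using that sg by blast
qed

lemma closed_cycle:
  assumes "closedZ n f g Z"
  shows "has_cycle (gr n f \<union> gr n g)"
proof -
  obtain sg zs where sg: "\<forall>z\<in>Z. sg z \<in> {1..n} \<and> f (sg z) = z \<and> g (sg z) \<in> Z \<and> g (sg z) \<noteq> z"
    and d: "distinct zs" and two: "2 \<le> length zs" and sz: "set zs \<subseteq> Z"
    and rot: "map (\<lambda>z. g (sg z)) zs = rotate 1 zs"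
    using closed_sigma[OF assms] by blast
  define ls where "ls = map sg zs"
  define js where "js = rotate 1 zs"
  have inj: "inj_on sg (set zs)"
    using sg sz by (intro inj_onI) (metis subsetD)
  have "length ls = length js" by (simp add: ls_def js_def)
  moreover have "length ls \<ge> 2" using two by (simp add: ls_def)
  moreover have "distinct ls" using d inj by (simp add: ls_def distinct_map)
  moreover have "distinct js" using d by (simp add: js_def)
  moreover have "\<forall>t < length ls. (ls ! t, js ! t) \<in> gr n f \<union> gr n g \<and>
      (ls ! ((t + 1) mod length ls), js ! t) \<in> gr n f \<union> gr n g"
  proof (intro allI impI)
    fix t assume t: "t < length ls"
    hence t': "t < length zs" by (simp add: ls_def)
    have zt: "zs ! t \<in> Z" using sz t' by auto
    have jt: "js ! t = g (sg (zs ! t))" using rot t' unfolding js_def by (metis nth_map)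
    have "(ls ! t, js ! t) \<in> gr n g" using jt sg zt t' by (simp add: ls_def gr_mem)
    moreover
    have pos: "0 < length zs" using t' by linarith
    have m: "(t + 1) mod length zs < length zs" using pos by simp
    have zt2: "zs ! ((t + 1) mod length zs) \<in> Z" using sz m by auto
    have jt2: "js ! t = zs ! ((t + 1) mod length zs)" using t' by (simp add: js_def nth_rot1)
    have "(ls ! ((t + 1) mod length ls), js ! t) \<in> gr n f"
      using jt2 sg zt2 m by (simp add: ls_def gr_mem)
    ultimately show "(ls ! t, js ! t) \<in> gr n f \<union> gr n g \<and>
      (ls ! ((t + 1) mod length ls), js ! t) \<in> gr n f \<union> gr n g" by blast
  qed
  ultimately show ?thesis unfolding has_cycle_def by blast
qed

lemma closed_incompat:
  assumes "closedZ n f g Z"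
  shows "\<not> compatible (gr n f) (gr n g)"
proof
  assume comp: "compatible (gr n f) (gr n g)"
  obtain sg zs where sg: "\<forall>z\<in>Z. sg z \<in> {1..n} \<and> f (sg z) = z \<and> g (sg z) \<in> Z \<and> g (sg z) \<noteq> z"
    and d: "distinct zs" and two: "2 \<le> length zs" and sz: "set zs \<subseteq> Z"
    and rot: "map (\<lambda>z. g (sg z)) zs = rotate 1 zs"
    using closed_sigma[OF assms] by blast
  define phi where "phi = (\<lambda>z. g (sg z))"
  have inj: "inj_on sg (set zs)"
    using sg sz by (intro inj_onI) (metis subsetD)
  have rot': "map phi zs = rotate 1 zs" using rot by (simp add: phi_def)
  have pimg: "phi ` set zs = set zs" using rot' by (metis set_map set_rotate)
  have pinj: "inj_on phi (set zs)" using rot' d by (metis distinct_map distinct_rotate)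
  define I where "I = sg ` set zs"
  define J where "J = set zs"
  define M1 where "M1 = (\<lambda>z. (sg z, z)) ` set zs"
  define M2 where "M2 = (\<lambda>z. (sg z, phi z)) ` set zs"
  have p1: "perfect_matching_in (gr n f) I J M1"
    unfolding perfect_matching_in_def
  proof (intro conjI ballI)
    show "M1 \<subseteq> gr n f" using sg sz by (auto simp: M1_def gr_mem)
    show "M1 \<subseteq> I \<times> J" by (auto simp: M1_def I_def J_def)
  next
    fix i assume "i \<in> I"
    then obtain z where z: "z \<in> set zs" "i = sg z" by (auto simp: I_def)
    show "\<exists>!j. (i, j) \<in> M1"
    proof
      show "(i, z) \<in> M1" using z by (auto simp: M1_def)
      fix j assume "(i, j) \<in> M1"
      then obtain z' where "z' \<in> set zs" "i = sg z'" "j = z'" by (auto simp: M1_def)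
      thus "j = z" using inj z by (metis inj_onD)
    qed
  next
    fix j assume j: "j \<in> J"
    show "\<exists>!i. (i, j) \<in> M1"
    proof
      show "(sg j, j) \<in> M1" using j by (auto simp: M1_def J_def)
      fix i assume "(i, j) \<in> M1"
      thus "i = sg j" by (auto simp: M1_def)
    qed
  qed
  have p2: "perfect_matching_in (gr n g) I J M2"
    unfolding perfect_matching_in_def
  proof (intro conjI ballI)
    show "M2 \<subseteq> gr n g" using sg sz by (auto simp: M2_def gr_mem phi_def)
    show "M2 \<subseteq> I \<times> J" using pimg by (auto simp: M2_def I_def J_def)
  next
    fix i assume "i \<in> I"
    then obtain z where z: "z \<in> set zs" "i = sg z" by (auto simp: I_def)
    show "\<exists>!j. (i, j) \<in> M2"
    proof
      show "(i, phi z) \<in> M2" using z by (auto simp: M2_def)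
      fix j assume "(i, j) \<in> M2"
      then obtain z' where "z' \<in> set zs" "i = sg z'" "j = phi z'" by (auto simp: M2_def)
      thus "j = phi z" using inj z by (metis inj_onD)
    qed
  next
    fix j assume j: "j \<in> J"
    have "j \<in> phi ` set zs" using j pimg by (simp add: J_def)
    then obtain z where z: "z \<in> set zs" "phi z = j" by blast
    show "\<exists>!i. (i, j) \<in> M2"
    proof
      show "(sg z, j) \<in> M2" using z by (auto simp: M2_def)
      fix i assume "(i, j) \<in> M2"
      then obtain z' where "z' \<in> set zs" "i = sg z'" "j = phi z'" by (auto simp: M2_def)
      thus "i = sg z" using pinj z by (metis inj_onD)
    qed
  qed
  have "M1 = M2" using comp p1 p2 unfolding compatible_def by blast
  obtain z0 where z0: "z0 \<in> set zs" using two by (cases zs) auto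
  have "(sg z0, z0) \<in> M2" using \<open>M1 = M2\<close> z0 by (auto simp: M1_def)
  then obtain z' where z': "z' \<in> set zs" "sg z0 = sg z'" "z0 = phi z'" by (auto simp: M2_def)
  hence "z' = z0" using inj z0 by (metis inj_onD)
  hence "phi z0 = z0" using z' by simp
  thus False using sg sz z0 by (auto simp: phi_def)
qed

lemma flow:
  assumes noc: "\<forall>Z. \<not> closedZ n f g Z"
    and L: "L \<subseteq> {1..n}"
    and cond: "\<forall>j. (\<exists>i\<in>L. g i = j \<and> f i \<noteq> j) \<longrightarrow>
                 (cnt L g j \<le> cnt L f j \<or> (\<exists>i\<in>L. f i = j \<and> g i \<noteq> j))"
  shows "\<forall>i\<in>L. f i = g i"
proof (rule ccontr)
  assume "\<not> (\<forall>i\<in>L. f i = g i)"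
  then obtain i0 where i0: "i0 \<in> L" "f i0 \<noteq> g i0" by blast
  define Z where "Z = {z. \<exists>i\<in>L. f i = z \<and> g i \<noteq> z}"
  have fL: "finite L" by (rule finite_subset[OF L]) simp
  have "Z \<subseteq> f ` L" by (auto simp: Z_def)
  hence fZ: "finite Z" by (rule finite_subset) (rule finite_imageI[OF fL])
  have "f i0 \<in> Z" using i0 by (auto simp: Z_def)
  hence ne: "Z \<noteq> {}" by blast
  have cl: "\<forall>z\<in>Z. \<exists>i\<in>{1..n}. f i = z \<and> g i \<in> Z \<and> g i \<noteq> z"
  proof
    fix z assume "z \<in> Z"
    then obtain i where i: "i \<in> L" "f i = z" "g i \<noteq> z" by (auto simp: Z_def)
    define y where "y = g i"
    have "y \<in> Z"
    proof (rule ccontr)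
      assume yn: "y \<notin> Z"
      have pre: "\<exists>i'\<in>L. g i' = y \<and> f i' \<noteq> y" using i by (auto simp: y_def)
      have nz: "\<not> (\<exists>i'\<in>L. f i' = y \<and> g i' \<noteq> y)" using yn by (auto simp: Z_def)
      have c: "cnt L g y \<le> cnt L f y"
        using cond[rule_format, OF pre] nz by blast
      have sub: "{i \<in> L. f i = y} \<subseteq> {i \<in> L. g i = y}" using yn by (auto simp: Z_def)
      have "i \<in> {i \<in> L. g i = y} - {i \<in> L. f i = y}" using i by (auto simp: y_def)
      hence "{i \<in> L. f i = y} \<subset> {i \<in> L. g i = y}" using sub by blast
      hence "card {i \<in> L. f i = y} < card {i \<in> L. g i = y}" using fL by (intro psubset_card_mono) auto
      thus False using c by (simp add: cnt_def)
    qed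
    thus "\<exists>i\<in>{1..n}. f i = z \<and> g i \<in> Z \<and> g i \<noteq> z" using i L by (auto simp: y_def)
  qed
  have "closedZ n f g Z" using fZ ne cl by (simp add: closedZ_def)
  thus False using noc by blast
qed



definition FF :: "((nat \<Rightarrow> nat) \<Rightarrow> (nat \<times> nat) set) \<Rightarrow> (nat \<Rightarrow> nat) \<Rightarrow> nat \<Rightarrow> nat" where
  "FF A v i = (THE j. (i,j) \<in> A v)"

lemma sum_upd1: "finite D \<Longrightarrow> x \<in> D \<Longrightarrow> (\<Sum>j\<in>D. (f(x := f x + 1)) j) = sum f D + (1::nat)"
proof -
  assume fD: "finite D" and x: "x \<in> D"
  have "(\<Sum>j\<in>D. (f(x := f x + 1)) j) = (f(x := f x + 1)) x + (\<Sum>j\<in>D - {x}. (f(x := f x + 1)) j)"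
    by (rule sum.remove[OF fD x])
  also have "(\<Sum>j\<in>D - {x}. (f(x := f x + 1)) j) = (\<Sum>j\<in>D - {x}. f j)" by (intro sum.cong) auto
  also have "sum f D = f x + (\<Sum>j\<in>D - {x}. f j)" by (rule sum.remove[OF fD x])
  ultimately show ?thesis by simp
qed

lemma dec_lemma: "(\<forall>j. f j + of_bool (r = j) = (w j :: nat)) \<Longrightarrow> w(r := w r - 1) = f \<and> 1 \<le> w r"
proof -
  assume h: "\<forall>j. f j + of_bool (r = j) = (w j :: nat)"
  have "w(r := w r - 1) = f"
  proof
    fix j show "(w(r := w r - 1)) j = f j" using h[rule_format, of j] by (cases "r = j") auto
  qed
  moreover have "1 \<le> w r" using h[rule_format, of r] by simp
  ultimately show ?thesis by simp
qed

context
  fixes n d :: nat and A :: "(nat \<Rightarrow> nat) \<Rightarrow> (nat \<times> nat) set"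
  assumes n1: "n \<ge> 1" and d1: "d \<ge> 1"
    and arr: "extended_tope_arrangement n d A"
    and acyc: "\<forall>w. lattice_point d (n + 1) w \<longrightarrow>
            acyclic_graph (\<Union>j\<in>{j\<in>{1..d}. w j \<ge> 1}. A (w(j := w j - 1)))"
begin

lemma F_gr: "lattice_point d n v \<Longrightarrow> A v = gr n (FF A v)"
  using arr tope_gr(1)[of n d "A v"] unfolding extended_tope_arrangement_def FF_def by auto

lemma F_rng: "lattice_point d n v \<Longrightarrow> i \<in> {1..n} \<Longrightarrow> FF A v i \<in> {1..d}"
  using arr tope_gr(2)[of n d "A v"] unfolding extended_tope_arrangement_def FF_def by auto

lemma F_cnt: "lattice_point d n v \<Longrightarrow> cnt {1..n} (FF A v) = v"
proof
  fix j assume v: "lattice_point d n v"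
  have "RD (A v) = v" using arr v unfolding extended_tope_arrangement_def by auto
  hence "RD (gr n (FF A v)) j = v j" using F_gr[OF v] by simp
  thus "cnt {1..n} (FF A v) j = v j" by (simp add: RD_gr)
qed

lemma F_noc: "lattice_point d n v \<Longrightarrow> lattice_point d n w \<Longrightarrow> \<forall>Z. \<not> closedZ n (FF A v) (FF A w) Z"
proof -
  assume v: "lattice_point d n v" and w: "lattice_point d n w"
  have "compatible (A v) (A w)" using arr v w unfolding extended_tope_arrangement_def by auto
  hence "compatible (gr n (FF A v)) (gr n (FF A w))" using F_gr[OF v] F_gr[OF w] by simp
  thus ?thesis using closed_incompat by blast
qed

lemma lp_up: "lattice_point d (n - 1) u \<Longrightarrow> x \<in> {1..d} \<Longrightarrow> lattice_point d n (u(x := u x + 1))"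
proof -
  assume u: "lattice_point d (n - 1) u" and x: "x \<in> {1..d}"
  have "(\<Sum>j\<in>{1..d}. (u(x := u x + 1)) j) = sum u {1..d} + 1" by (rule sum_upd1) (use x in auto)
  also have "sum u {1..d} = n - 1" using u by (simp add: lattice_point_def)
  finally have "(\<Sum>j\<in>{1..d}. (u(x := u x + 1)) j) = n" using n1 by simp
  thus ?thesis using u x by (auto simp: lattice_point_def)
qed

abbreviation S where "S u x \<equiv> FF A (u(x := u x + 1))"

lemma S_cnt: "lattice_point d (n - 1) u \<Longrightarrow> x \<in> {1..d} \<Longrightarrow> cnt {1..n} (S u x) j = u j + of_bool (x = j)"
  using F_cnt[OF lp_up] by (cases "x = j") auto

lemma S_rng: "lattice_point d (n - 1) u \<Longrightarrow> x \<in> {1..d} \<Longrightarrow> i \<in> {1..n} \<Longrightarrow> S u x i \<in> {1..d}"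
  using F_rng[OF lp_up] by blast

lemma S_noc: "lattice_point d (n - 1) u \<Longrightarrow> x \<in> {1..d} \<Longrightarrow> y \<in> {1..d} \<Longrightarrow> \<forall>Z. \<not> closedZ n (S u x) (S u y) Z"
  using F_noc[OF lp_up lp_up] by blast

lemma S_N:
  assumes u: "lattice_point d (n - 1) u" and x: "x \<in> {1..d}" and i: "i \<in> {1..n}" and e: "S u x i = y"
  shows "S u y i = y"
proof (rule ccontr)
  assume ne: "S u y i \<noteq> y"
  have y: "y \<in> {1..d}" using S_rng[OF u x i] e by simp
  have xy: "x \<noteq> y" using ne e by auto
  have "\<forall>i\<in>{1..n}. S u x i = S u y i"
  proof (rule flow[OF S_noc[OF u x y]])
    show "{1..n} \<subseteq> {1..n}" by simp
    show "\<forall>j. (\<exists>i\<in>{1..n}. S u y i = j \<and> S u x i \<noteq> j) \<longrightarrow>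
         cnt {1..n} (S u y) j \<le> cnt {1..n} (S u x) j \<or> (\<exists>i\<in>{1..n}. S u x i = j \<and> S u y i \<noteq> j)"
    proof (intro allI impI)
      fix j
      show "cnt {1..n} (S u y) j \<le> cnt {1..n} (S u x) j \<or> (\<exists>i\<in>{1..n}. S u x i = j \<and> S u y i \<noteq> j)"
      proof (cases "j = y")
        case True thus ?thesis using i e ne by blast
      next
        case False thus ?thesis using S_cnt[OF u x, of j] S_cnt[OF u y, of j] by simp
      qed
    qed
  qed
  thus False using i e ne by auto
qed

lemma S_F2:
  assumes u: "lattice_point d (n - 1) u" and x: "x \<in> {1..d}" and y: "y \<in> {1..d}" and xy: "x \<noteq> y"
    and i0: "i0 \<in> {1..n}" and ex: "S u x i0 = x" and ey: "S u y i0 = y"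
  shows "\<forall>i\<in>{1..n} - {i0}. S u x i = S u y i"
proof (rule flow[OF S_noc[OF u x y]])
  show "{1..n} - {i0} \<subseteq> {1..n}" by auto
  show "\<forall>j. (\<exists>i\<in>{1..n} - {i0}. S u y i = j \<and> S u x i \<noteq> j) \<longrightarrow>
         cnt ({1..n} - {i0}) (S u y) j \<le> cnt ({1..n} - {i0}) (S u x) j \<or>
         (\<exists>i\<in>{1..n} - {i0}. S u x i = j \<and> S u y i \<noteq> j)"
  proof (intro allI impI disjI1)
    fix j
    have "cnt {1..n} (S u x) j = cnt ({1..n} - {i0}) (S u x) j + of_bool (S u x i0 = j)"
      by (rule cnt_remove) (use i0 in auto)
    moreover have "cnt {1..n} (S u y) j = cnt ({1..n} - {i0}) (S u y) j + of_bool (S u y i0 = j)"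
      by (rule cnt_remove) (use i0 in auto)
    ultimately show "cnt ({1..n} - {i0}) (S u y) j \<le> cnt ({1..n} - {i0}) (S u x) j"
      using S_cnt[OF u x, of j] S_cnt[OF u y, of j] ex ey by simp
  qed
qed

lemma S_step:
  assumes u: "lattice_point d (n - 1) u" and x: "x \<in> {1..d}" and r: "r \<in> {1..d}" and xr: "x \<noteq> r"
  shows "\<exists>i\<in>{1..n}. S u x i = x \<and> S u r i \<noteq> x"
proof (rule ccontr)
  assume "\<not> ?thesis"
  hence "{i \<in> {1..n}. S u x i = x} \<subseteq> {i \<in> {1..n}. S u r i = x}" by auto
  hence "cnt {1..n} (S u x) x \<le> cnt {1..n} (S u r) x" unfolding cnt_def by (intro card_mono) auto
  thus False using S_cnt[OF u x, of x] S_cnt[OF u r, of x] xr by simp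
qed

definition Dl where "Dl u r x = {i \<in> {1..n}. S u r i \<noteq> S u x i}"

lemma Dl_fin: "finite (Dl u r x)" unfolding Dl_def by auto

lemma G_lemma:
  assumes u: "lattice_point d (n - 1) u" and r: "r \<in> {1..d}" and b: "b \<in> {1..d}" and m: "m \<in> {1..n}"
    and bm: "S u b m = b" and br: "b \<noteq> S u r m"
  shows "x \<in> {1..d} \<Longrightarrow> m \<in> Dl u r x \<Longrightarrow> card (Dl u r b) \<le> card (Dl u r x)"
proof (induction "card (Dl u r x)" arbitrary: x rule: less_induct)
  case less
  have x: "x \<in> {1..d}" and mx: "m \<in> Dl u r x" using less by auto
  have xr: "x \<noteq> r" using mx by (auto simp: Dl_def)
  obtain i where i: "i \<in> {1..n}" "S u x i = x" "S u r i \<noteq> x" using S_step[OF u x r xr] by blast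
  define c where "c = S u r i"
  have c: "c \<in> {1..d}" using S_rng[OF u r i(1)] by (simp add: c_def)
  have cc: "S u c i = c" using S_N[OF u r i(1)] by (simp add: c_def)
  have xc: "x \<noteq> c" using i by (simp add: c_def)
  have F2xc: "\<forall>j\<in>{1..n} - {i}. S u x j = S u c j" using S_F2[OF u x c xc i(1) i(2) cc] .
  show ?case
  proof (cases "i = m")
    case True
    show ?thesis
    proof (cases "b = x")
      case True thus ?thesis by simp
    next
      case False
      have F2bx: "\<forall>j\<in>{1..n} - {m}. S u b j = S u x j"
        using S_F2[OF u b x False m bm] i True by simp
      have "Dl u r b \<subseteq> Dl u r x"
      proof
        fix j assume j: "j \<in> Dl u r b"
        show "j \<in> Dl u r x"
        proof (cases "j = m")
          case True thus ?thesis using mx by simp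
        next
          case False thus ?thesis using j F2bx by (auto simp: Dl_def)
        qed
      qed
      thus ?thesis by (intro card_mono Dl_fin)
    qed
  next
    case False
    have mc: "m \<in> Dl u r c" using mx F2xc False m by (auto simp: Dl_def)
    have sub: "Dl u r c \<subset> Dl u r x"
    proof
      show "Dl u r c \<subseteq> Dl u r x"
      proof
        fix j assume j: "j \<in> Dl u r c"
        have "j \<noteq> i" using j cc by (auto simp: Dl_def c_def)
        thus "j \<in> Dl u r x" using j F2xc by (auto simp: Dl_def)
      qed
      have "i \<in> Dl u r x" using i by (auto simp: Dl_def)
      moreover have "i \<notin> Dl u r c" using cc by (auto simp: Dl_def c_def)
      ultimately show "Dl u r c \<noteq> Dl u r x" by blast
    qed
    have lt: "card (Dl u r c) < card (Dl u r x)" by (rule psubset_card_mono[OF Dl_fin sub])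
    have "card (Dl u r b) \<le> card (Dl u r c)" using less(1)[OF lt c mc] .
    thus ?thesis using lt by simp
  qed
qed

definition Top where "Top u T \<longleftrightarrow> (\<forall>i\<in>{1..n}. T i \<in> {1..d} \<and> S u (T i) i = T i)"

lemma choice_lemma:
  assumes u: "lattice_point d (n - 1) u" and top: "Top u T" and r: "r \<in> {1..d}"
    and ne: "{i \<in> {1..n}. T i \<noteq> S u r i} \<noteq> {}"
  shows "\<exists>l\<in>{i \<in> {1..n}. T i \<noteq> S u r i}. \<forall>m\<in>{i \<in> {1..n}. T i \<noteq> S u r i} - {l}. S u (T l) m = S u r m"
proof -
  define B where "B = {i \<in> {1..n}. T i \<noteq> S u r i}"
  obtain l0 where "l0 \<in> B" using ne by (auto simp: B_def)
  from ex_has_least_nat[of "\<lambda>l. l \<in> B" l0 "\<lambda>l. card (Dl u r (T l))", OF this]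
  obtain l where l: "l \<in> B" and lmin: "\<forall>y. y \<in> B \<longrightarrow> card (Dl u r (T l)) \<le> card (Dl u r (T y))"
    by blast
  have lB: "l \<in> {1..n}" "T l \<noteq> S u r l" using l by (auto simp: B_def)
  define a where "a = T l"
  define p where "p = S u r l"
  have a: "a \<in> {1..d}" "S u a l = a" using top lB by (auto simp: Top_def a_def)
  have p: "p \<in> {1..d}" using S_rng[OF u r lB(1)] by (simp add: p_def)
  have pp: "S u p l = p" using S_N[OF u r lB(1)] by (simp add: p_def)
  have ap: "a \<noteq> p" using lB by (simp add: a_def p_def)
  have F2: "\<forall>j\<in>{1..n} - {l}. S u a j = S u p j" using S_F2[OF u a(1) p ap lB(1) a(2) pp] .
  have "\<forall>m\<in>B - {l}. S u a m = S u r m"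
  proof (rule ccontr)
    assume "\<not> (\<forall>m\<in>B - {l}. S u a m = S u r m)"
    then obtain m where m: "m \<in> B" "m \<noteq> l" "S u a m \<noteq> S u r m" by blast
    have mn: "m \<in> {1..n}" "T m \<noteq> S u r m" using m by (auto simp: B_def)
    have mp: "m \<in> Dl u r p" using m mn F2 by (auto simp: Dl_def)
    have sub: "Dl u r p \<subset> Dl u r a"
    proof
      show "Dl u r p \<subseteq> Dl u r a"
      proof
        fix j assume j: "j \<in> Dl u r p"
        have "j \<noteq> l" using j pp by (auto simp: Dl_def p_def)
        thus "j \<in> Dl u r a" using j F2 by (auto simp: Dl_def)
      qed
      have "l \<in> Dl u r a" using lB a by (auto simp: Dl_def a_def)
      moreover have "l \<notin> Dl u r p" using pp by (auto simp: Dl_def p_def)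
      ultimately show "Dl u r p \<noteq> Dl u r a" by blast
    qed
    have lt: "card (Dl u r p) < card (Dl u r a)" by (rule psubset_card_mono[OF Dl_fin sub])
    have tm: "T m \<in> {1..d}" "S u (T m) m = T m" using top mn by (auto simp: Top_def)
    have "card (Dl u r (T m)) \<le> card (Dl u r p)"
      by (rule G_lemma[OF u r tm(1) mn(1) tm(2) mn(2) p mp])
    moreover have "card (Dl u r a) \<le> card (Dl u r (T m))" using lmin m(1) by (simp add: a_def)
    ultimately show False using lt by simp
  qed
  thus ?thesis using l unfolding B_def a_def by blast
qed


lemma main_ind:
  assumes u: "lattice_point d (n - 1) u"
  shows "\<forall>T r. Top u T \<longrightarrow> r \<in> {1..d} \<longrightarrow> card {i \<in> {1..n}. T i \<noteq> S u r i} = k \<longrightarrow>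
           (\<forall>i\<in>{1..n}. FF A (cnt {1..n} T) i = T i)"
proof (induction k rule: less_induct)
  case (less k)
  show ?case
  proof (intro allI impI)
    fix T r assume top: "Top u T" and r: "r \<in> {1..d}" and ck: "card {i \<in> {1..n}. T i \<noteq> S u r i} = k"
    define B where "B = {i \<in> {1..n}. T i \<noteq> S u r i}"
    have fB: "finite B" by (simp add: B_def)
    have Trng: "\<forall>i\<in>{1..n}. T i \<in> {1..d}" using top by (simp add: Top_def)
    define v where "v = cnt {1..n} T"
    have lpv: "lattice_point d n v" unfolding v_def by (rule lp_cnt[OF Trng])
    show "\<forall>i\<in>{1..n}. FF A (cnt {1..n} T) i = T i"
    proof (cases "B = {}")
      case True
      hence eq: "\<forall>i\<in>{1..n}. T i = S u r i" by (auto simp: B_def)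
      have "cnt {1..n} T = cnt {1..n} (S u r)" by (rule ext, rule cnt_cong[OF eq])
      also have "\<dots> = u(r := u r + 1)" by (rule F_cnt[OF lp_up[OF u r]])
      finally show ?thesis using eq by simp
    next
      case False
      obtain l where l: "l \<in> B" and lch: "\<forall>m\<in>B - {l}. S u (T l) m = S u r m"
        using choice_lemma[OF u top r] False unfolding B_def by blast
      have lB: "l \<in> {1..n}" "T l \<noteq> S u r l" using l by (auto simp: B_def)
      define a where "a = T l"
      define p where "p = S u r l"
      have a: "a \<in> {1..d}" "S u a l = a" using top lB by (auto simp: Top_def a_def)
      have p: "p \<in> {1..d}" using S_rng[OF u r lB(1)] by (simp add: p_def)
      have pp: "S u p l = p" using S_N[OF u r lB(1)] by (simp add: p_def)
      have ap: "a \<noteq> p" using lB by (simp add: a_def p_def)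
      have "0 < card B" using False fB by (simp add: card_gt_0_iff)
      hence kpos: "0 < k" using ck by (simp add: B_def)
      define X1 where "X1 = T(l := p)"
      define X2 where "X2 = (\<lambda>i. if i \<in> B - {l} then T i else S u a i)"
      have top1: "Top u X1" using top p pp by (auto simp: Top_def X1_def)
      have top2: "Top u X2"
        unfolding Top_def
      proof
        fix i assume i: "i \<in> {1..n}"
        show "X2 i \<in> {1..d} \<and> S u (X2 i) i = X2 i"
        proof (cases "i \<in> B - {l}")
          case True thus ?thesis using top i by (simp add: X2_def Top_def)
        next
          case False
          have "X2 i = S u a i" unfolding X2_def by (rule if_not_P[OF False])
          thus ?thesis using S_rng[OF u a(1) i] S_N[OF u a(1) i] by simp
        qed
      qed
      have B1: "{i \<in> {1..n}. X1 i \<noteq> S u r i} = B - {l}" by (auto simp: X1_def B_def p_def)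
      have c1: "card {i \<in> {1..n}. X1 i \<noteq> S u r i} < k"
        using B1 ck l fB kpos by (simp add: B_def card_Diff_singleton)
      have IH1: "\<forall>i\<in>{1..n}. FF A (cnt {1..n} X1) i = X1 i"
        using less[rule_format, OF c1 top1 r refl] by blast
      have B2: "{i \<in> {1..n}. X2 i \<noteq> S u a i} \<subseteq> B - {l}" by (auto simp: X2_def)
      have "card {i \<in> {1..n}. X2 i \<noteq> S u a i} \<le> card (B - {l})" by (rule card_mono[OF _ B2]) (simp add: fB)
      hence c2: "card {i \<in> {1..n}. X2 i \<noteq> S u a i} < k"
        using ck l fB kpos by (simp add: B_def card_Diff_singleton)
      have IH2: "\<forall>i\<in>{1..n}. FF A (cnt {1..n} X2) i = X2 i"
        using less[rule_format, OF c2 top2 a(1) refl] by blast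
      define w where "w = v(p := v p + 1)"
      have lpw: "lattice_point d (n + 1) w"
      proof -
        have "(\<Sum>j\<in>{1..d}. w j) = sum v {1..d} + 1" unfolding w_def by (rule sum_upd1) (use p in auto)
        also have "sum v {1..d} = n" using lpv by (simp add: lattice_point_def)
        finally show ?thesis using lpv p by (auto simp: lattice_point_def w_def)
      qed
      have e1: "\<forall>j. cnt {1..n} X1 j + of_bool (a = j) = w j"
      proof
        fix j
        have "cnt {1..n} X1 j + of_bool (T l = j) = cnt {1..n} T j + of_bool (p = j)"
          unfolding X1_def by (rule cnt_upd[OF lB(1)])
        thus "cnt {1..n} X1 j + of_bool (a = j) = w j" by (cases "p = j") (auto simp: a_def w_def v_def)
      qed
      have e2: "\<forall>j. cnt {1..n} X2 j + of_bool (r = j) = w j"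
      proof
        fix j
        have "cnt {1..n} X2 j + cnt {1..n} (S u r) j = cnt {1..n} X1 j + cnt {1..n} (S u a) j"
        proof (rule cnt_swap)
          show "finite {1..n}" by simp
          show "\<forall>i\<in>{1..n}. of_bool (X2 i = j) + of_bool (S u r i = j) = (of_bool (X1 i = j) + of_bool (S u a i = j) :: nat)"
          proof
            fix i assume i: "i \<in> {1..n}"
            show "of_bool (X2 i = j) + of_bool (S u r i = j) = (of_bool (X1 i = j) + of_bool (S u a i = j) :: nat)"
            proof (cases "i \<in> B - {l}")
              case True
              hence "S u a i = S u r i" using lch by (simp add: a_def)
              thus ?thesis using True by (auto simp: X1_def X2_def)
            next
              case False
              hence "X1 i = S u r i" using i by (auto simp: X1_def B_def p_def)
              moreover have "X2 i = S u a i" unfolding X2_def by (rule if_not_P[OF False])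
              ultimately show ?thesis by (simp add: add.commute)
            qed
          qed
        qed
        thus "cnt {1..n} X2 j + of_bool (r = j) = w j"
          using S_cnt[OF u r, of j] S_cnt[OF u a(1), of j] e1[rule_format, of j] by simp
      qed
      have e3: "\<forall>j. v j + of_bool (p = j) = w j" by (auto simp: w_def)
      have d1': "w(a := w a - 1) = cnt {1..n} X1" "1 \<le> w a" using dec_lemma[OF e1] by auto
      have d2': "w(r := w r - 1) = cnt {1..n} X2" "1 \<le> w r" using dec_lemma[OF e2] by auto
      have d3': "w(p := w p - 1) = v" "1 \<le> w p" using dec_lemma[OF e3] by auto
      define U where "U = (\<Union>j\<in>{j\<in>{1..d}. w j \<ge> 1}. A (w(j := w j - 1)))"
      have acU: "\<not> has_cycle U" using acyc lpw by (simp add: U_def acyclic_graph_def)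
      have lp1: "lattice_point d n (cnt {1..n} X1)" by (rule lp_cnt) (use top1 in \<open>simp add: Top_def\<close>)
      have lp2: "lattice_point d n (cnt {1..n} X2)" by (rule lp_cnt) (use top2 in \<open>simp add: Top_def\<close>)
      have "a \<in> {j\<in>{1..d}. w j \<ge> 1}" using a(1) d1'(2) by simp
      hence "A (w(a := w a - 1)) \<subseteq> U" unfolding U_def by (rule UN_upper)
      hence A1: "A (cnt {1..n} X1) \<subseteq> U" by (simp only: d1'(1))
      have "r \<in> {j\<in>{1..d}. w j \<ge> 1}" using r d2'(2) by simp
      hence "A (w(r := w r - 1)) \<subseteq> U" unfolding U_def by (rule UN_upper)
      hence A2: "A (cnt {1..n} X2) \<subseteq> U" by (simp only: d2'(1))
      have "p \<in> {j\<in>{1..d}. w j \<ge> 1}" using p d3'(2) by simp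
      hence "A (w(p := w p - 1)) \<subseteq> U" unfolding U_def by (rule UN_upper)
      hence A3: "A (v) \<subseteq> U" by (simp only: d3'(1))
      have g1: "A (cnt {1..n} X1) = gr n X1" using F_gr[OF lp1] gr_cong[OF IH1] by simp
      have g2: "A (cnt {1..n} X2) = gr n X2" using F_gr[OF lp2] gr_cong[OF IH2] by simp
      have gT: "gr n T \<subseteq> gr n X1 \<union> gr n X2"
      proof
        fix e assume "e \<in> gr n T"
        then obtain i where i: "i \<in> {1..n}" "e = (i, T i)" by (auto simp: gr_def)
        show "e \<in> gr n X1 \<union> gr n X2"
        proof (cases "i = l")
          case True
          have "X2 l = a" using a by (simp add: X2_def)
          thus ?thesis using True i by (auto simp: gr_mem a_def)
        next
          case False thus ?thesis using i by (auto simp: gr_mem X1_def)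
        qed
      qed
      have "gr n (FF A v) \<union> gr n T \<subseteq> U" using A1 A2 A3 g1 g2 gT F_gr[OF lpv] by blast
      hence "\<not> has_cycle (gr n (FF A v) \<union> gr n T)" using acU has_cycle_mono by blast
      hence noc: "\<forall>Z. \<not> closedZ n (FF A v) T Z" using closed_cycle by blast
      have "\<forall>i\<in>{1..n}. FF A v i = T i"
      proof (rule flow[OF noc])
        show "{1..n} \<subseteq> {1..n}" by simp
        show "\<forall>j. (\<exists>i\<in>{1..n}. T i = j \<and> FF A v i \<noteq> j) \<longrightarrow>
           cnt {1..n} T j \<le> cnt {1..n} (FF A v) j \<or> (\<exists>i\<in>{1..n}. FF A v i = j \<and> T i \<noteq> j)"
          using F_cnt[OF lpv] by (simp add: v_def)
      qed
      thus ?thesis by (simp add: v_def)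
    qed
  qed
qed

lemma main_thm:
  assumes u: "lattice_point d (n - 1) u" and T: "is_tope n d T"
    and sub: "T \<subseteq> (\<Union>j\<in>{1..d}. A (u(j := u j + 1)))"
  shows "T = A (RD T)"
proof -
  define t where "t = (\<lambda>i. THE j. (i,j) \<in> T)"
  have Tt: "T = gr n t" using tope_gr(1)[OF T] by (simp add: t_def)
  have trng: "\<forall>i\<in>{1..n}. t i \<in> {1..d}" using tope_gr(2)[OF T] by (simp add: t_def)
  have top: "Top u t"
    unfolding Top_def
  proof
    fix i assume i: "i \<in> {1..n}"
    have "(i, t i) \<in> T" using Tt i by (simp add: gr_mem)
    then obtain j where j: "j \<in> {1..d}" "(i, t i) \<in> A (u(j := u j + 1))" using sub by blast
    have "A (u(j := u j + 1)) = gr n (S u j)" by (rule F_gr[OF lp_up[OF u j(1)]])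
    hence "S u j i = t i" using j(2) by (simp add: gr_mem)
    thus "t i \<in> {1..d} \<and> S u (t i) i = t i" using S_N[OF u j(1) i] trng i by simp
  qed
  have r1: "(1::nat) \<in> {1..d}" using d1 by simp
  have m: "\<forall>i\<in>{1..n}. FF A (cnt {1..n} t) i = t i"
    using main_ind[OF u, rule_format, OF top r1 refl] by blast
  have RDT: "RD T = cnt {1..n} t" using Tt by (simp add: fun_eq_iff RD_gr)
  have lpt: "lattice_point d n (cnt {1..n} t)" by (rule lp_cnt[OF trng])
  have "A (RD T) = gr n (FF A (cnt {1..n} t))" using RDT F_gr[OF lpt] by simp
  also have "\<dots> = gr n t" by (rule gr_cong[OF m])
  finally show ?thesis using Tt by simp
qed
end

theorem mainTheorem10:
  fixes n d :: nat and A :: "(nat \<Rightarrow> nat) \<Rightarrow> (nat \<times> nat) set"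
  assumes "n \<ge> 1" and "d \<ge> 1"
    and "extended_tope_arrangement n d A"
    and "\<forall>w. lattice_point d (n + 1) w \<longrightarrow>
            acyclic_graph (\<Union>j\<in>{j\<in>{1..d}. w j \<ge> 1}. A (w(j := w j - 1)))"
  shows "\<forall>u T. lattice_point d (n - 1) u \<and> is_tope n d T \<and>
            T \<subseteq> (\<Union>j\<in>{1..d}. A (u(j := u j + 1)))
            \<longrightarrow> T = A (RD T)"
  using main_thm[OF assms] by blast

end
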